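(* Let $\mathbf T$ be a countable homogeneous tournament and $\mathbf T^*$ an expansion of $\mathbf T$ as in the context. If $\mathrm{Age}(\mathbf T^* )$ has the expansion property relative to $\mathrm{Age}(\mathbf T)$, then for every positive integer $n$, $\mathrm{Age}(I_n[\mathbf T]^* )$ has the expansion property relative to $\mathrm{Age}(I_n[\mathbf T])$, where $I_n[\mathbf T]$ is the reduct of $I_n[\mathbf T]^*$ to $\{E\}$.
   Context: The age $\mathrm{Age}(\mathbf F)$ of a structure $\mathbf F$ is the class of finite structures embeddable in $\mathbf F$. Expansion property: let $L\subseteq L^*$ be relational languages, $\mathcal K$ a class of finite $L$-structures and $\mathcal K^*$ a class of finite $L^*$-structures whose $L$-reducts lie in $\mathcal K$. $\mathcal K^*$ has the expansion property relative to $\mathcal K$ if for every $\mathbf A\in\mathcal K$ there is $\mathbf B\in\mathcal K$ such that for all $\mathbf A^*,\mathbf B^*\in\mathcal K^*$ whose $L$-reducts are $\mathbf A$ and $\mathbf B$ respectively, $\mathbf A^*$ embeds into $\mathbf B^*$. A tournament is a directed graph in which every pair of distinct vertices carries exactly one directed edge; it is homogeneous if every isomorphism between finite substructures extends to an automorphism. $\mathbf T=(T,E^{\mathbf T})$ is a countable homogeneous tournament, and $\mathbf T^*$ is an expansion of $\mathbf T$ to a countable relational language $L_{\mathbf T^*}\supseteq\{E,<\}$ in which $<$ is interpreted as a linear order $<^*$ on $T$. For a positive integer $n$, $[n]=\{0,\dots,n-1\}$. The structure $I_n[\mathbf T]^*$ has universe $[n]\times T$ and language $L_{\mathbf T^*}\cup\{P_0,\dots,P_{n-1}\}$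 ($P_i$ new unary symbols), interpreted as: for each $m$-ary $R\in L_{\mathbf T^*}\setminus\{<\}$ (including $E$), $R((k_1,x_1),\dots,(k_m,x_m))$ iff $k_1=\dots=k_m$ and $R^{\mathbf T^*}(x_1,\dots,x_m)$; $(i,x)<(j,y)$ iff $i<j$, or $i=j$ and $x<^*y$; and $P_i=\{i\}\times T$. *)

theory Defs
  imports Main "HOL-Library.Countable_Set"
begin

type_synonym ('a, 'r) struct = "'a set \<times> ('r \<Rightarrow> 'a list \<Rightarrow> bool)"

definition univ :: "('a, 'r) struct \<Rightarrow> 'a set" where
  "univ A = fst A"

definition rel :: "('a, 'r) struct \<Rightarrow> 'r \<Rightarrow> 'a list \<Rightarrow> bool" where
  "rel A = snd A"

definition wf_struct :: "'r set \<Rightarrow> ('r \<Rightarrow> nat) \<Rightarrow> ('a, 'r) struct \<Rightarrow> bool" where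
  "wf_struct L ar A \<longleftrightarrow>
     (\<forall>R xs. rel A R xs \<longrightarrow> R \<in> L \<and> length xs = ar R \<and> set xs \<subseteq> univ A)"

definition embedding :: "'r set \<Rightarrow> ('r \<Rightarrow> nat) \<Rightarrow> ('a \<Rightarrow> 'b) \<Rightarrow> ('a, 'r) struct \<Rightarrow> ('b, 'r) struct \<Rightarrow> bool" where
  "embedding L ar f A B \<longleftrightarrow>
     inj_on f (univ A) \<and> f ` univ A \<subseteq> univ B \<and>
     (\<forall>R\<in>L. \<forall>xs. length xs = ar R \<and> set xs \<subseteq> univ A \<longrightarrow>
        (rel A R xs \<longleftrightarrow> rel B R (map f xs)))"

definition embeds :: "'r set \<Rightarrow> ('r \<Rightarrow> nat) \<Rightarrow> ('a, 'r) struct \<Rightarrow> ('b, 'r) struct \<Rightarrow> bool" where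
  "embeds L ar A B \<longleftrightarrow> (\<exists>f. embedding L ar f A B)"

definition induced :: "('a, 'r) struct \<Rightarrow> 'a set \<Rightarrow> ('a, 'r) struct" where
  "induced A S = (S, \<lambda>R xs. rel A R xs \<and> set xs \<subseteq> S)"

definition reduct :: "'r set \<Rightarrow> ('a, 'r) struct \<Rightarrow> ('a, 'r) struct" where
  "reduct L' A = (univ A, \<lambda>R xs. R \<in> L' \<and> rel A R xs)"

text \<open>Since all notions involved are isomorphism invariant, we take
representatives with universe a finite set of natural numbers.\<close>
definition Age :: "'r set \<Rightarrow> ('r \<Rightarrow> nat) \<Rightarrow> ('a, 'r) struct \<Rightarrow> (nat, 'r) struct set" where
  "Age L ar F = {A. finite (univ A) \<and> wf_struct L ar A \<and> embeds L ar A F}"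

definition expansion_property ::
  "'r set \<Rightarrow> 'r set \<Rightarrow> ('r \<Rightarrow> nat) \<Rightarrow> ('a, 'r) struct set \<Rightarrow> ('a, 'r) struct set \<Rightarrow> bool" where
  "expansion_property L Lstar ar K Kstar \<longleftrightarrow>
     (\<forall>A\<in>K. \<exists>B\<in>K. \<forall>As\<in>Kstar. \<forall>Bs\<in>Kstar.
        reduct L As = A \<longrightarrow> reduct L Bs = B \<longrightarrow> embeds Lstar ar As Bs)"

definition homogeneous :: "'r set \<Rightarrow> ('r \<Rightarrow> nat) \<Rightarrow> ('a, 'r) struct \<Rightarrow> bool" where
  "homogeneous L ar F \<longleftrightarrow>
     (\<forall>A B f. finite A \<and> A \<subseteq> univ F \<and> B \<subseteq> univ F \<and> bij_betw f A B \<and>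
        embedding L ar f (induced F A) (induced F B) \<longrightarrow>
        (\<exists>g. bij_betw g (univ F) (univ F) \<and> embedding L ar g F F \<and> (\<forall>x\<in>A. g x = f x)))"

definition tournament :: "'r \<Rightarrow> ('a, 'r) struct \<Rightarrow> bool" where
  "tournament E T \<longleftrightarrow>
     (\<forall>x\<in>univ T. \<not> rel T E [x, x]) \<and>
     (\<forall>x\<in>univ T. \<forall>y\<in>univ T. x \<noteq> y \<longrightarrow> (rel T E [x, y] \<longleftrightarrow> \<not> rel T E [y, x]))"

definition strict_linear_order_on :: "'a set \<Rightarrow> ('a \<Rightarrow> 'a \<Rightarrow> bool) \<Rightarrow> bool" where
  "strict_linear_order_on S lt \<longleftrightarrow>
     (\<forall>x\<in>S. \<not> lt x x) \<and>
     (\<forall>x\<in>S. \<forall>y\<in>S. \<forall>z\<in>S. lt x y \<longrightarrow> lt y z \<longrightarrow> lt x z) \<and>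
     (\<forall>x\<in>S. \<forall>y\<in>S. x \<noteq> y \<longrightarrow> lt x y \<or> lt y x)"

text \<open>Language of I_n[T]^*: old symbols Inl R (R in L), plus unary Inr i = P_i.\<close>
definition In_lang :: "'r set \<Rightarrow> nat \<Rightarrow> ('r + nat) set" where
  "In_lang L n = Inl ` L \<union> Inr ` {..<n}"

definition In_arity :: "('r \<Rightarrow> nat) \<Rightarrow> ('r + nat) \<Rightarrow> nat" where
  "In_arity ar S = (case S of Inl R \<Rightarrow> ar R | Inr i \<Rightarrow> 1)"

definition In_star :: "'r set \<Rightarrow> ('r \<Rightarrow> nat) \<Rightarrow> 'r \<Rightarrow> nat \<Rightarrow> ('a, 'r) struct \<Rightarrow>
    (nat \<times> 'a, 'r + nat) struct" where
  "In_star L ar Lt n Ts =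
     ({..<n} \<times> univ Ts,
      \<lambda>S xs. set xs \<subseteq> {..<n} \<times> univ Ts \<and>
        (case S of
           Inl R \<Rightarrow> R \<in> L \<and>
             (if R = Lt then
                (\<exists>i x j y. xs = [(i, x), (j, y)] \<and> (i < j \<or> (i = j \<and> rel Ts Lt [x, y])))
              else
                length xs = ar R \<and> (\<exists>k. \<forall>p\<in>set xs. fst p = k) \<and> rel Ts R (map snd xs))
         | Inr i \<Rightarrow> i < n \<and> (\<exists>x. xs = [(i, x)])))"

end

theory Submission
  imports Defs
begin

lemma univ_pair[simp]: "univ (a,b) = a" by (simp add: univ_def)
lemma rel_pair[simp]: "rel (a,b) = b" by (simp add: rel_def)
lemma univ_reduct[simp]: "univ (reduct L A) = univ A" by (simp add: reduct_def univ_def)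
lemma rel_reduct[simp]: "rel (reduct L A) R xs = (R \<in> L \<and> rel A R xs)" by (simp add: reduct_def rel_def)
lemma univ_In[simp]: "univ (In_star L ar Lt n Ts) = {..<n} \<times> univ Ts" by (simp add: In_star_def)
lemma struct_eq: "A = (univ A, rel A)" by (simp add: univ_def rel_def)

lemma len2: "length xs = 2 \<Longrightarrow> \<exists>a b. xs = [a,b]"
  by (cases xs; cases "tl xs"; auto simp: numeral_2_eq_2)

locale ctx =
  fixes LT :: "'r set" and ar :: "'r \<Rightarrow> nat" and E Lt :: 'r and T :: "('a,'r) struct" and n :: nat
  assumes EL: "E \<in> LT" and LtL: "Lt \<in> LT" and ELt: "E \<noteq> Lt" and arE: "ar E = 2" and arLt: "ar Lt = 2"
   and cU: "countable (univ T)"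
   and tour: "tournament E (reduct {E} T)"
   and hom: "homogeneous {E} ar (reduct {E} T)"
   and EP: "expansion_property {E} LT ar (Age {E} ar (reduct {E} T)) (Age LT ar T)"
begin

lemma irr: "x \<in> univ T \<Longrightarrow> \<not> rel T E [x,x]"
  using tour by (auto simp: tournament_def)
lemma tot: "x \<in> univ T \<Longrightarrow> y \<in> univ T \<Longrightarrow> x \<noteq> y \<Longrightarrow> rel T E [x,y] \<or> rel T E [y,x]"
  using tour unfolding tournament_def univ_reduct rel_reduct by blast

lemma Hprime:
  assumes S: "finite S" "S \<subseteq> univ T"
  shows "\<exists>B0::(nat,'r) struct. finite (univ B0) \<and> wf_struct {E} ar B0 \<and> (\<exists>g0. embedding {E} ar g0 B0 (reduct {E} T)) \<and>
    (\<forall>u v. inj_on u S \<and> u ` S \<subseteq> univ T \<and> (\<forall>x\<in>S. \<forall>y\<in>S. rel T E [u x, u y] = rel T E [x,y]) \<longrightarrow>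
       embedding {E} ar v B0 (reduct {E} T) \<longrightarrow>
       (\<exists>\<psi>. inj_on \<psi> S \<and> \<psi> ` S \<subseteq> univ B0 \<and> (\<forall>R\<in>LT. \<forall>ys. length ys = ar R \<and> set ys \<subseteq> S \<longrightarrow> (rel T R (map u ys) = rel T R (map (v \<circ> \<psi>) ys)))))"
proof -
  define \<iota> where "\<iota> = to_nat_on (univ T)"
  have iinj: "inj_on \<iota> (univ T)" using cU by (simp add: \<iota>_def inj_on_to_nat_on)
  define j where "j = inv_into (univ T) \<iota>"
  have ji: "\<And>x. x \<in> univ T \<Longrightarrow> j (\<iota> x) = x" using iinj by (simp add: j_def)
  have jinj: "inj_on j (\<iota> ` S)" unfolding j_def using S by (intro inj_on_inv_into) auto
  define pb where "pb u = ((\<iota> ` S, \<lambda>R xs. R \<in> LT \<and> length xs = ar R \<and> set xs \<subseteq> \<iota> ` S \<and> rel T R (map (u \<circ> j) xs)) :: (nat,'r) struct)" for u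
  define A0 where "A0 = reduct {E} (pb id)"
  have A0: "A0 \<in> Age {E} ar (reduct {E} T)"
  proof -
    have "embedding {E} ar j A0 (reduct {E} T)"
      unfolding embedding_def A0_def pb_def using jinj S ji by (auto simp: EL)
    moreover have "wf_struct {E} ar A0" unfolding wf_struct_def A0_def pb_def by auto
    ultimately show ?thesis unfolding Age_def embeds_def A0_def pb_def using S by auto
  qed
  then obtain B0 where B0: "B0 \<in> Age {E} ar (reduct {E} T)" and HB: "\<forall>As\<in>Age LT ar T. \<forall>Bs\<in>Age LT ar T. reduct {E} As = A0 \<longrightarrow> reduct {E} Bs = B0 \<longrightarrow> embeds LT ar As Bs"
    using EP unfolding expansion_property_def by blast
  have B0wf: "wf_struct {E} ar B0" using B0 by (simp add: Age_def)
  show ?thesis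
  proof (rule exI[of _ B0], intro conjI allI impI)
    show "finite (univ B0)" "wf_struct {E} ar B0" "\<exists>g0. embedding {E} ar g0 B0 (reduct {E} T)"
      using B0 by (auto simp: Age_def embeds_def)
    fix u v
    assume u: "inj_on u S \<and> u ` S \<subseteq> univ T \<and> (\<forall>x\<in>S. \<forall>y\<in>S. rel T E [u x, u y] = rel T E [x,y])"
      and v: "embedding {E} ar v B0 (reduct {E} T)"
    define Bs where "Bs = ((univ B0, \<lambda>R xs. R \<in> LT \<and> length xs = ar R \<and> set xs \<subseteq> univ B0 \<and> rel T R (map v xs)) :: (nat,'r) struct)"
    have "pb u \<in> Age LT ar T"
    proof -
      have "inj_on (u \<circ> j) (\<iota> ` S)"
      proof (rule comp_inj_on[OF jinj])
        have "j ` \<iota> ` S = S" using S ji by (force simp: image_image)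
        thus "inj_on u (j ` \<iota> ` S)" using u by simp
      qed
      moreover have "(u \<circ> j) ` \<iota> ` S \<subseteq> univ T" using u S ji by (auto simp: subset_iff)
      ultimately have "embedding LT ar (u \<circ> j) (pb u) T" unfolding embedding_def pb_def by auto
      thus ?thesis unfolding Age_def embeds_def using S by (auto simp: pb_def wf_struct_def)
    qed
    moreover have "Bs \<in> Age LT ar T"
    proof -
      have "embedding LT ar v Bs T" using v unfolding embedding_def Bs_def by auto
      thus ?thesis unfolding Age_def embeds_def using B0 by (auto simp: Bs_def wf_struct_def Age_def)
    qed
    moreover have "reduct {E} (pb u) = A0"
    proof -
      have "(\<lambda>R xs. R \<in> {E} \<and> rel (pb u) R xs) = (\<lambda>R xs. R \<in> {E} \<and> rel (pb id) R xs)"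
      proof (intro ext)
        fix R xs
        show "(R \<in> {E} \<and> rel (pb u) R xs) = (R \<in> {E} \<and> rel (pb id) R xs)"
        proof (cases "R = E \<and> length xs = 2 \<and> set xs \<subseteq> \<iota> ` S")
          case True
          then obtain a b where xs: "xs = [a,b]" using len2 by blast
          with True obtain x y where xy: "x \<in> S" "y \<in> S" "a = \<iota> x" "b = \<iota> y" by auto
          then have "j (\<iota> x) = x" "j (\<iota> y) = y" using S ji by auto
          then show ?thesis using True xs u xy by (auto simp: pb_def arE EL)
        next
          case False
          then show ?thesis by (auto simp: pb_def arE)
        qed
      qed
      thus ?thesis unfolding A0_def reduct_def by (simp add: pb_def)
    qed
    moreover have "reduct {E} Bs = B0"
    proof -
      have "(\<lambda>R xs. R \<in> {E} \<and> rel Bs R xs) = rel B0"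
      proof (intro ext iffI)
        fix R xs assume "R \<in> {E} \<and> rel Bs R xs"
        then show "rel B0 R xs" using v EL unfolding Bs_def embedding_def by auto
      next
        fix R xs assume r: "rel B0 R xs"
        then have "R = E" "length xs = ar R" "set xs \<subseteq> univ B0" using B0wf unfolding wf_struct_def by auto
        then show "R \<in> {E} \<and> rel Bs R xs" using v EL r unfolding Bs_def embedding_def by auto
      qed
      thus ?thesis unfolding reduct_def Bs_def by (simp add: struct_eq[symmetric])
    qed
    ultimately obtain \<psi>0 where p0: "embedding LT ar \<psi>0 (pb u) Bs" using HB unfolding embeds_def by blast
    show "\<exists>\<psi>. inj_on \<psi> S \<and> \<psi> ` S \<subseteq> univ B0 \<and> (\<forall>R\<in>LT. \<forall>ys. length ys = ar R \<and> set ys \<subseteq> S \<longrightarrow> (rel T R (map u ys) = rel T R (map (v \<circ> \<psi>) ys)))"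
    proof (intro exI conjI ballI allI impI)
      show "inj_on (\<psi>0 \<circ> \<iota>) S" using p0 iinj S
        by (intro comp_inj_on) (auto simp: embedding_def pb_def inj_on_subset)
      show "(\<psi>0 \<circ> \<iota>) ` S \<subseteq> univ B0" using p0 by (auto simp: embedding_def pb_def Bs_def)
      fix R ys assume R: "R \<in> LT" and ys: "length ys = ar R \<and> set ys \<subseteq> S"
      have m: "map (u \<circ> j) (map \<iota> ys) = map u ys" using ys S ji by (auto intro!: map_idI)
      have "set (map \<psi>0 (map \<iota> ys)) \<subseteq> univ B0" using p0 ys by (auto simp: embedding_def pb_def Bs_def)
      then show "rel T R (map u ys) = rel T R (map (v \<circ> (\<psi>0 \<circ> \<iota>)) ys)"
      proof -
        have e: "\<forall>R\<in>LT. \<forall>xs. length xs = ar R \<and> set xs \<subseteq> \<iota> ` S \<longrightarrow> (rel (pb u) R xs = rel Bs R (map \<psi>0 xs))"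
          using p0 unfolding embedding_def by (simp add: pb_def)
        have "rel (pb u) R (map \<iota> ys) = rel Bs R (map \<psi>0 (map \<iota> ys))"
          using e R ys by (auto simp: image_mono)
        moreover have "rel (pb u) R (map \<iota> ys) = rel T R (map u ys)"
          using R ys m by (auto simp: pb_def image_mono simp del: map_map) 
        moreover have "rel Bs R (map \<psi>0 (map \<iota> ys)) = rel T R (map (v \<circ> (\<psi>0 \<circ> \<iota>)) ys)"
          using R ys \<open>set (map \<psi>0 (map \<iota> ys)) \<subseteq> univ B0\<close> by (simp add: Bs_def)
        ultimately show ?thesis by simp
      qed
    qed
  qed
qed

abbreviation "I \<equiv> In_star LT ar Lt n T"

lemma I_E: "rel I (Inl E) [(i,x),(j,y)] \<longleftrightarrow> i<n \<and> j<n \<and> x\<in>univ T \<and> y\<in>univ T \<and> i=j \<and> rel T E [x,y]"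
  by (auto simp: In_star_def EL ELt arE)

lemma I_Inr: "rel I (Inr j) [p] \<longleftrightarrow> p \<in> {..<n} \<times> univ T \<and> j<n \<and> fst p = j"
  by (cases p) (auto simp: In_star_def)

lemma conn:
  assumes "p \<in> {..<n} \<times> univ T" "q \<in> {..<n} \<times> univ T" "p \<noteq> q"
  shows "fst p = fst q \<longleftrightarrow> rel I (Inl E) [p,q] \<or> rel I (Inl E) [q,p]"
proof -
  obtain i x j y where pq: "p = (i,x)" "q = (j,y)" by (cases p, cases q)
  show ?thesis
  proof
    assume "fst p = fst q"
    then have "x \<noteq> y" "i = j" using assms pq by auto
    then show "rel I (Inl E) [p,q] \<or> rel I (Inl E) [q,p]" using tot[of x y] assms pq by (auto simp: I_E)
  next
    assume "rel I (Inl E) [p,q] \<or> rel I (Inl E) [q,p]"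
    then show "fst p = fst q" using pq by (auto simp: I_E)
  qed
qed

lemma transfer:
  assumes PQ: "\<forall>x\<in>set xs. P x = (\<beta> x, X x) \<and> Q x = (\<beta> x, Y x) \<and> \<beta> x < n \<and> X x \<in> univ T \<and> Y x \<in> univ T"
  and H: "\<forall>R. \<Sigma> = Inl R \<longrightarrow> R \<in> LT \<longrightarrow> length xs = ar R \<longrightarrow> (\<forall>x\<in>set xs. \<forall>y\<in>set xs. \<beta> x = \<beta> y) \<longrightarrow> (rel T R (map X xs) \<longleftrightarrow> rel T R (map Y xs))"
  and L: "length xs = In_arity ar \<Sigma>"
  shows "rel I \<Sigma> (map P xs) \<longleftrightarrow> rel I \<Sigma> (map Q xs)"
proof (cases \<Sigma>)
  case (Inr j)
  then obtain a where xs: "xs = [a]" using L by (cases xs) (auto simp: In_arity_def)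
  then show ?thesis using PQ Inr by (auto simp: I_Inr)
next
  case (Inl R)
  have s1: "set (map P xs) \<subseteq> {..<n} \<times> univ T" "set (map Q xs) \<subseteq> {..<n} \<times> univ T" using PQ by auto
  show ?thesis
  proof (cases "R = Lt")
    case True
    then have "length xs = 2" using L Inl arLt by (auto simp: In_arity_def)
    then obtain a b where xs: "xs = [a,b]" using len2 by blast
    have h: "R \<in> LT \<Longrightarrow> \<beta> a = \<beta> b \<Longrightarrow> rel T R [X a, X b] \<longleftrightarrow> rel T R [Y a, Y b]"
      using H Inl L xs by (auto simp: In_arity_def)
    show ?thesis using s1 PQ h True unfolding Inl xs by (auto simp: In_star_def)
  next
    case False
    have m1: "map snd (map P xs) = map X xs" "map snd (map Q xs) = map Y xs" 
      "map (snd \<circ> P) xs = map X xs" "map (snd \<circ> Q) xs = map Y xs" using PQ by auto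
    have k1: "(\<exists>k. \<forall>p\<in>set (map P xs). fst p = k) \<longleftrightarrow> (\<exists>k. \<forall>x\<in>set xs. \<beta> x = k)"
         "(\<exists>k. \<forall>p\<in>set (map Q xs). fst p = k) \<longleftrightarrow> (\<exists>k. \<forall>x\<in>set xs. \<beta> x = k)"
         "(\<exists>k. \<forall>p\<in>set xs. fst (P p) = k) \<longleftrightarrow> (\<exists>k. \<forall>x\<in>set xs. \<beta> x = k)"
         "(\<exists>k. \<forall>p\<in>set xs. fst (Q p) = k) \<longleftrightarrow> (\<exists>k. \<forall>x\<in>set xs. \<beta> x = k)" using PQ by auto
    have h: "R \<in> LT \<Longrightarrow> length xs = ar R \<Longrightarrow> (\<exists>k. \<forall>x\<in>set xs. \<beta> x = k) \<Longrightarrow> rel T R (map X xs) \<longleftrightarrow> rel T R (map Y xs)"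
      using H Inl by auto
    have "rel I \<Sigma> (map P xs) = (R \<in> LT \<and> length xs = ar R \<and> (\<exists>k. \<forall>x\<in>set xs. \<beta> x = k) \<and> rel T R (map X xs))"
      using s1 False unfolding Inl by (simp add: In_star_def m1 k1 del: map_map)
    moreover have "rel I \<Sigma> (map Q xs) = (R \<in> LT \<and> length xs = ar R \<and> (\<exists>k. \<forall>x\<in>set xs. \<beta> x = k) \<and> rel T R (map Y xs))"
      using s1 False unfolding Inl by (simp add: In_star_def m1 k1 del: map_map)
    ultimately show ?thesis using h by blast
  qed
qed

lemma main:
  assumes A: "A \<in> Age {Inl E} (In_arity ar) (reduct {Inl E} I)"
  shows "\<exists>B\<in>Age {Inl E} (In_arity ar) (reduct {Inl E} I). \<forall>As\<in>Age (In_lang LT n) (In_arity ar) I.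
     \<forall>Bs\<in>Age (In_lang LT n) (In_arity ar) I. reduct {Inl E} As = A \<longrightarrow> reduct {Inl E} Bs = B \<longrightarrow>
       embeds (In_lang LT n) (In_arity ar) As Bs"
proof -
  obtain f where f: "embedding {Inl E} (In_arity ar) f A (reduct {Inl E} I)" and finA: "finite (univ A)"
    using A by (auto simp: Age_def embeds_def)
  have fU: "\<And>a. a \<in> univ A \<Longrightarrow> f a \<in> {..<n} \<times> univ T" using f by (auto simp: embedding_def)
  have finj: "inj_on f (univ A)" using f by (simp add: embedding_def)
  have fE: "\<And>a b. a\<in>univ A \<Longrightarrow> b \<in> univ A \<Longrightarrow> rel A (Inl E) [a,b] \<longleftrightarrow> rel I (Inl E) [f a, f b]"
  proof -
    fix a b assume "a\<in>univ A" "b \<in> univ A"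
    then show "rel A (Inl E) [a,b] \<longleftrightarrow> rel I (Inl E) [f a, f b]"
      using f unfolding embedding_def by (auto simp: In_arity_def arE dest!: spec[of _ "[a,b]"])
  qed
  define S where "S = snd ` f ` univ A"
  have S: "finite S" "S \<subseteq> univ T" using finA fU by (force simp: S_def)+
  obtain B0 :: "(nat,'r) struct" and g0 where finB0: "finite (univ B0)" and wfB0: "wf_struct {E} ar B0"
     and g0: "embedding {E} ar g0 B0 (reduct {E} T)"
     and HB: "\<And>u v. inj_on u S \<and> u ` S \<subseteq> univ T \<and> (\<forall>x\<in>S. \<forall>y\<in>S. rel T E [u x, u y] = rel T E [x,y]) \<Longrightarrow>
       embedding {E} ar v B0 (reduct {E} T) \<Longrightarrow>
       (\<exists>\<psi>. inj_on \<psi> S \<and> \<psi> ` S \<subseteq> univ B0 \<and> (\<forall>R\<in>LT. \<forall>ys. length ys = ar R \<and> set ys \<subseteq> S \<longrightarrow> (rel T R (map u ys) = rel T R (map (v \<circ> \<psi>) ys))))"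
    using Hprime[OF S] by blast
  define Bu where "Bu = prod_encode ` ({..<n} \<times> univ B0)"
  define B where "B = ((Bu, \<lambda>S xs. S = Inl E \<and> set xs \<subseteq> Bu \<and> (\<exists>x y. xs = [x,y] \<and> fst (prod_decode x) = fst (prod_decode y) \<and> rel B0 E [snd (prod_decode x), snd (prod_decode y)])) :: (nat, 'r+nat) struct)"
  have encB: "\<And>i b. prod_encode (i,b) \<in> Bu \<longleftrightarrow> i < n \<and> b \<in> univ B0"
    unfolding Bu_def using inj_prod_encode by (auto simp: inj_eq)
  have Bu_cases: "\<And>x. x \<in> Bu \<Longrightarrow> \<exists>i b. x = prod_encode (i,b) \<and> i < n \<and> b \<in> univ B0"
    unfolding Bu_def by auto
  have relBenc: "\<And>i b j c. rel B (Inl E) [prod_encode(i,b), prod_encode(j,c)] \<longleftrightarrow> (i<n \<and> j<n \<and> b\<in>univ B0 \<and> c\<in>univ B0 \<and> i = j \<and> rel B0 E [b,c])"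
    unfolding B_def using encB by auto
  have g0E: "\<And>b c. b \<in> univ B0 \<Longrightarrow> c \<in> univ B0 \<Longrightarrow> rel B0 E [b,c] \<longleftrightarrow> rel T E [g0 b, g0 c]"
    using g0 unfolding embedding_def by (auto simp: arE dest!: spec[of _ "[_,_]"])
  have g0U: "\<And>b. b \<in> univ B0 \<Longrightarrow> g0 b \<in> univ T" using g0 unfolding embedding_def by auto
  have g0inj: "inj_on g0 (univ B0)" using g0 unfolding embedding_def by auto
  have B_Age: "B \<in> Age {Inl E} (In_arity ar) (reduct {Inl E} I)"
  proof -
    define e where "e x = (fst (prod_decode x), g0 (snd (prod_decode x)))" for x
    have ee: "\<And>i b. e (prod_encode (i,b)) = (i, g0 b)" by (simp add: e_def)
    have "finite Bu" unfolding Bu_def using finB0 by simp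
    moreover have "wf_struct {Inl E} (In_arity ar) B" unfolding wf_struct_def B_def
      by (auto simp: In_arity_def arE)
    moreover have "embedding {Inl E} (In_arity ar) e B (reduct {Inl E} I)"
      unfolding embedding_def
    proof (intro conjI ballI allI impI)
      show "inj_on e (univ B)"
      proof (rule inj_onI)
        fix x y assume xy: "x \<in> univ B" "y \<in> univ B" "e x = e y"
        obtain i b where x: "x = prod_encode (i,b)" "i < n" "b \<in> univ B0" using Bu_cases[of x] xy by (auto simp: B_def)
        obtain j c where y: "y = prod_encode (j,c)" "j < n" "c \<in> univ B0" using Bu_cases[of y] xy by (auto simp: B_def)
        have "i = j" "g0 b = g0 c" using xy(3) unfolding x y ee by auto
        then have "b = c" using g0inj x y by (meson inj_onD)
        then show "x = y" using x y \<open>i = j\<close> by simp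
      qed
      show "e ` univ B \<subseteq> univ (reduct {Inl E} I)"
        using Bu_cases g0U unfolding B_def by (force simp: ee)
      fix R xs assume R: "R \<in> {Inl E}" and xs: "length xs = In_arity ar R \<and> set xs \<subseteq> univ B"
      then have "length xs = 2" by (simp add: In_arity_def arE)
      then obtain x y where xy: "xs = [x,y]" using len2 by blast
      obtain i b where x: "x = prod_encode (i,b)" "i < n" "b \<in> univ B0" using Bu_cases[of x] xs xy by (auto simp: B_def)
      obtain j c where y: "y = prod_encode (j,c)" "j < n" "c \<in> univ B0" using Bu_cases[of y] xs xy by (auto simp: B_def)
      show "rel B R xs = rel (reduct {Inl E} I) R (map e xs)"
        using R xy x y g0E[of b c] g0U[of b] g0U[of c] by (auto simp: relBenc ee I_E)
    qed
    ultimately show ?thesis unfolding Age_def embeds_def by (auto simp: B_def)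
  qed
  show ?thesis
  proof (rule bexI[OF _ B_Age], intro ballI impI)
    fix As Bs assume As: "As \<in> Age (In_lang LT n) (In_arity ar) I" and Bs: "Bs \<in> Age (In_lang LT n) (In_arity ar) I"
      and rA: "reduct {Inl E} As = A" and rB: "reduct {Inl E} Bs = B"
    obtain h where h: "embedding (In_lang LT n) (In_arity ar) h As I" using As by (auto simp: Age_def embeds_def)
    obtain k where k: "embedding (In_lang LT n) (In_arity ar) k Bs I" using Bs by (auto simp: Age_def embeds_def)
    have uA: "univ As = univ A" using arg_cong[OF rA, of univ] by simp
    have uB: "univ Bs = Bu" using arg_cong[OF rB, of univ] by (simp add: B_def)
    have relA: "\<And>xs. rel As (Inl E) xs = rel A (Inl E) xs"
    proof -
      fix xs have "rel (reduct {Inl E} As) (Inl E) xs = rel A (Inl E) xs" using rA by simp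
      thus "rel As (Inl E) xs = rel A (Inl E) xs" by simp
    qed
    have relB: "\<And>xs. rel Bs (Inl E) xs = rel B (Inl E) xs"
    proof -
      fix xs have "rel (reduct {Inl E} Bs) (Inl E) xs = rel B (Inl E) xs" using rB by simp
      thus "rel Bs (Inl E) xs = rel B (Inl E) xs" by simp
    qed
    have IEl: "Inl E \<in> In_lang LT n" using EL by (simp add: In_lang_def)
    have hU: "\<And>a. a \<in> univ A \<Longrightarrow> h a \<in> {..<n} \<times> univ T" using h uA by (auto simp: embedding_def)
    have hinj: "inj_on h (univ A)" using h uA by (simp add: embedding_def)
    have hrel: "\<And>\<Sigma> xs. \<Sigma> \<in> In_lang LT n \<Longrightarrow> length xs = In_arity ar \<Sigma> \<Longrightarrow> set xs \<subseteq> univ A \<Longrightarrow> rel As \<Sigma> xs \<longleftrightarrow> rel I \<Sigma> (map h xs)"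
      using h uA unfolding embedding_def by blast
    have hE: "\<And>a b. a\<in>univ A \<Longrightarrow> b \<in> univ A \<Longrightarrow> rel A (Inl E) [a,b] \<longleftrightarrow> rel I (Inl E) [h a, h b]"
      using hrel[OF IEl, of "[_,_]"] relA by (simp add: In_arity_def arE)
    have kU: "\<And>x. x \<in> Bu \<Longrightarrow> k x \<in> {..<n} \<times> univ T" using k uB by (auto simp: embedding_def)
    have kinj: "inj_on k Bu" using k uB by (simp add: embedding_def)
    have krel: "\<And>\<Sigma> xs. \<Sigma> \<in> In_lang LT n \<Longrightarrow> length xs = In_arity ar \<Sigma> \<Longrightarrow> set xs \<subseteq> Bu \<Longrightarrow> rel Bs \<Sigma> xs \<longleftrightarrow> rel I \<Sigma> (map k xs)"
      using k uB unfolding embedding_def by blast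
    have kE: "\<And>x y. x\<in>Bu \<Longrightarrow> y \<in> Bu \<Longrightarrow> rel B (Inl E) [x,y] \<longleftrightarrow> rel I (Inl E) [k x, k y]"
      using krel[OF IEl, of "[_,_]"] relB by (simp add: In_arity_def arE)
    define \<phi> where "\<phi> a = fst (f a)" for a
    define f2 where "f2 a = snd (f a)" for a
    define \<beta> where "\<beta> a = fst (h a)" for a
    define h2 where "h2 a = snd (h a)" for a
    have fa: "\<And>a. f a = (\<phi> a, f2 a)" by (simp add: \<phi>_def f2_def)
    have ha: "\<And>a. h a = (\<beta> a, h2 a)" by (simp add: \<beta>_def h2_def)
    have same: "\<And>a b. a \<in> univ A \<Longrightarrow> b \<in> univ A \<Longrightarrow> \<phi> a = \<phi> b \<longleftrightarrow> \<beta> a = \<beta> b"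
    proof -
      fix a b assume ab: "a \<in> univ A" "b \<in> univ A"
      show "\<phi> a = \<phi> b \<longleftrightarrow> \<beta> a = \<beta> b"
      proof (cases "a = b")
        case False
        then have "f a \<noteq> f b" "h a \<noteq> h b" using finj hinj ab by (auto simp: inj_on_def)
        then show ?thesis using conn[OF fU[OF ab(1)] fU[OF ab(2)]] conn[OF hU[OF ab(1)] hU[OF ab(2)]]
          fE[OF ab] fE[OF ab(2,1)] hE[OF ab] hE[OF ab(2,1)] by (simp add: \<phi>_def \<beta>_def)
      qed simp
    qed
    have f2inj: "\<And>a b. a \<in> univ A \<Longrightarrow> b \<in> univ A \<Longrightarrow> \<phi> a = \<phi> b \<Longrightarrow> f2 a = f2 b \<Longrightarrow> a = b"
      using finj fa by (metis inj_on_def)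
    have h2inj: "\<And>a b. a \<in> univ A \<Longrightarrow> b \<in> univ A \<Longrightarrow> \<phi> a = \<phi> b \<Longrightarrow> h2 a = h2 b \<Longrightarrow> a = b"
      using hinj ha same by (metis inj_on_def)
    have Epres: "\<And>a b. a \<in> univ A \<Longrightarrow> b \<in> univ A \<Longrightarrow> \<phi> a = \<phi> b \<Longrightarrow> rel T E [f2 a, f2 b] \<longleftrightarrow> rel T E [h2 a, h2 b]"
    proof -
      fix a b assume ab: "a \<in> univ A" "b \<in> univ A" "\<phi> a = \<phi> b"
      then have "\<beta> a = \<beta> b" using same by blast
      then show "rel T E [f2 a, f2 b] \<longleftrightarrow> rel T E [h2 a, h2 b]"
        using fE[OF ab(1,2)] hE[OF ab(1,2)] fU[OF ab(1)] fU[OF ab(2)] hU[OF ab(1)] hU[OF ab(2)] ab(3)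
        unfolding fa ha by (auto simp: I_E)
    qed

    define K where "K p = {a \<in> univ A. \<phi> a = p}" for p
    define m where "m p = h2 \<circ> inv_into (K p) f2" for p
    have f2injK: "\<And>p. inj_on f2 (K p)" using f2inj by (auto simp: K_def inj_on_def)
    have h2injK: "\<And>p. inj_on h2 (K p)" using h2inj by (auto simp: K_def inj_on_def)
    have mh: "\<And>a p. a \<in> K p \<Longrightarrow> m p (f2 a) = h2 a" by (simp add: m_def inv_into_f_f[OF f2injK])
    have f2U: "\<And>a. a \<in> univ A \<Longrightarrow> f2 a \<in> univ T" using fU fa by (metis SigmaD2)
    have h2U: "\<And>a. a \<in> univ A \<Longrightarrow> h2 a \<in> univ T" using hU ha by (metis SigmaD2)
    have ex_u: "\<forall>p. \<exists>g. bij_betw g (univ T) (univ T) \<and> embedding {E} ar g (reduct {E} T) (reduct {E} T) \<and> (\<forall>x\<in>f2 ` K p. g x = m p x)"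
    proof
      fix p
      have bij: "bij_betw (m p) (f2 ` K p) (h2 ` K p)"
        unfolding m_def using bij_betw_trans[OF bij_betw_inv_into[OF inj_on_imp_bij_betw[OF f2injK]] inj_on_imp_bij_betw[OF h2injK]] .
      have emb: "embedding {E} ar (m p) (induced (reduct {E} T) (f2 ` K p)) (induced (reduct {E} T) (h2 ` K p))"
        unfolding embedding_def
      proof (intro conjI ballI allI impI)
        show "inj_on (m p) (univ (induced (reduct {E} T) (f2 ` K p)))"
          using bij by (simp add: induced_def bij_betw_def)
        show "m p ` univ (induced (reduct {E} T) (f2 ` K p)) \<subseteq> univ (induced (reduct {E} T) (h2 ` K p))"
          using bij by (simp add: induced_def bij_betw_def)
        fix R xs assume R: "R \<in> {E}" and xs: "length xs = ar R \<and> set xs \<subseteq> univ (induced (reduct {E} T) (f2 ` K p))"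
        then have "length xs = 2" by (simp add: arE)
        then obtain x y where xy: "xs = [x,y]" using len2 by blast
        obtain a b where ab: "a \<in> K p" "b \<in> K p" "x = f2 a" "y = f2 b" using xs xy by (auto simp: induced_def)
        have "rel T E [f2 a, f2 b] \<longleftrightarrow> rel T E [h2 a, h2 b]" using Epres ab by (auto simp: K_def)
        then show "rel (induced (reduct {E} T) (f2 ` K p)) R xs = rel (induced (reduct {E} T) (h2 ` K p)) R (map (m p) xs)"
          using R xy ab mh by (auto simp: induced_def)
      qed
      have fin: "finite (f2 ` K p)" using finA by (simp add: K_def)
      have sub: "f2 ` K p \<subseteq> univ T" "h2 ` K p \<subseteq> univ T" using f2U h2U by (auto simp: K_def)
      show "\<exists>g. bij_betw g (univ T) (univ T) \<and> embedding {E} ar g (reduct {E} T) (reduct {E} T) \<and> (\<forall>x\<in>f2 ` K p. g x = m p x)"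
        using hom fin sub bij emb unfolding homogeneous_def univ_reduct by blast
    qed
    obtain u where u: "\<And>p. bij_betw (u p) (univ T) (univ T) \<and> embedding {E} ar (u p) (reduct {E} T) (reduct {E} T) \<and> (\<forall>x\<in>f2 ` K p. u p x = m p x)"
      using choice[OF ex_u] by blast
    have uh: "\<And>a. a \<in> univ A \<Longrightarrow> u (\<phi> a) (f2 a) = h2 a"
    proof -
      fix a assume a: "a \<in> univ A"
      then have "a \<in> K (\<phi> a)" by (simp add: K_def)
      then show "u (\<phi> a) (f2 a) = h2 a" using u[of "\<phi> a"] mh by auto
    qed
    have uemb: "\<And>p. inj_on (u p) S \<and> u p ` S \<subseteq> univ T \<and> (\<forall>x\<in>S. \<forall>y\<in>S. rel T E [u p x, u p y] = rel T E [x,y])"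
    proof -
      fix p
      have b: "bij_betw (u p) (univ T) (univ T)" and e: "embedding {E} ar (u p) (reduct {E} T) (reduct {E} T)" using u by auto
      have "inj_on (u p) S" using b S(2) by (meson bij_betw_def inj_on_subset)
      moreover have "u p ` S \<subseteq> univ T" using b S(2) by (auto simp: bij_betw_def)
      moreover have "\<forall>x\<in>S. \<forall>y\<in>S. rel T E [u p x, u p y] = rel T E [x,y]"
      proof (intro ballI)
        fix x y assume "x \<in> S" "y \<in> S"
        then have "set [x,y] \<subseteq> univ (reduct {E} T)" using S(2) by auto
        then show "rel T E [u p x, u p y] = rel T E [x,y]" using e unfolding embedding_def
          by (auto simp: arE dest!: spec[of _ "[x,y]"])
      qed
      ultimately show "inj_on (u p) S \<and> u p ` S \<subseteq> univ T \<and> (\<forall>x\<in>S. \<forall>y\<in>S. rel T E [u p x, u p y] = rel T E [x,y])" by blast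
    qed

    define v where "v i b = snd (k (prod_encode (i,b)))" for i b
    define blk where "blk i b = fst (k (prod_encode (i,b)))" for i b
    have kenc: "\<And>i b. k (prod_encode (i,b)) = (blk i b, v i b)" by (simp add: v_def blk_def)
    have kencU: "\<And>i b. i < n \<Longrightarrow> b \<in> univ B0 \<Longrightarrow> blk i b < n \<and> v i b \<in> univ T"
      using kU encB kenc by (metis SigmaE lessThan_iff prod.inject)
    have B0tot: "\<And>b c. b \<in> univ B0 \<Longrightarrow> c \<in> univ B0 \<Longrightarrow> b \<noteq> c \<Longrightarrow> rel B0 E [b,c] \<or> rel B0 E [c,b]"
    proof -
      fix b c assume bc: "b \<in> univ B0" "c \<in> univ B0" "b \<noteq> c"
      then have "g0 b \<noteq> g0 c" using g0inj by (meson inj_onD)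
      then show "rel B0 E [b,c] \<or> rel B0 E [c,b]" using tot[OF g0U g0U] g0E bc by blast
    qed
    have kEenc: "\<And>i j b c. i < n \<Longrightarrow> j < n \<Longrightarrow> b \<in> univ B0 \<Longrightarrow> c \<in> univ B0 \<Longrightarrow>
        (i = j \<and> rel B0 E [b,c]) \<longleftrightarrow> rel I (Inl E) [(blk i b, v i b), (blk j c, v j c)]"
      using relBenc kE encB kenc by metis
    have blk_const: "\<And>i b c. i < n \<Longrightarrow> b \<in> univ B0 \<Longrightarrow> c \<in> univ B0 \<Longrightarrow> blk i b = blk i c"
    proof -
      fix i b c assume ibc: "i < n" "b \<in> univ B0" "c \<in> univ B0"
      show "blk i b = blk i c"
      proof (cases "b = c")
        case False
        then show ?thesis using B0tot[OF ibc(2,3)] kEenc[OF ibc(1) ibc(1) ibc(2,3)] kEenc[OF ibc(1) ibc(1) ibc(3,2)]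
          by (auto simp: I_E)
      qed simp
    qed
    have blk_inj: "\<And>i j b. i < n \<Longrightarrow> j < n \<Longrightarrow> i \<noteq> j \<Longrightarrow> b \<in> univ B0 \<Longrightarrow> blk i b \<noteq> blk j b"
    proof -
      fix i j b assume ijb: "i < n" "j < n" "i \<noteq> j" "b \<in> univ B0"
      have "prod_encode (i,b) \<noteq> prod_encode (j,b)" using ijb(3) inj_prod_encode by (auto simp: inj_eq)
      then have ne: "(blk i b, v i b) \<noteq> (blk j b, v j b)" using kinj encB ijb kenc by (metis inj_onD)
      have "\<not> rel I (Inl E) [(blk i b, v i b), (blk j b, v j b)]" "\<not> rel I (Inl E) [(blk j b, v j b), (blk i b, v i b)]"
        using kEenc[OF ijb(1,2,4,4)] kEenc[OF ijb(2,1,4,4)] ijb(3) by auto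
      then show "blk i b \<noteq> blk j b" using conn[OF _ _ ne] kencU ijb by auto
    qed
    have vemb: "\<And>i. i < n \<Longrightarrow> embedding {E} ar (v i) B0 (reduct {E} T)"
    proof -
      fix i assume i: "i < n"
      show "embedding {E} ar (v i) B0 (reduct {E} T)" unfolding embedding_def
      proof (intro conjI ballI allI impI)
        show "inj_on (v i) (univ B0)"
        proof (rule inj_onI)
          fix b c assume bc: "b \<in> univ B0" "c \<in> univ B0" "v i b = v i c"
          then have "k (prod_encode (i,b)) = k (prod_encode (i,c))" using kenc blk_const[OF i bc(1,2)] by simp
          then have "prod_encode (i,b) = prod_encode (i,c)" using kinj encB i bc by (meson inj_onD)
          then show "b = c" using inj_prod_encode by (auto simp: inj_eq)
        qed
        show "v i ` univ B0 \<subseteq> univ (reduct {E} T)" using kencU i by auto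
        fix R xs assume R: "R \<in> {E}" and xs: "length xs = ar R \<and> set xs \<subseteq> univ B0"
        then have "length xs = 2" by (simp add: arE)
        then obtain b c where xy: "xs = [b,c]" using len2 by blast
        have bc: "b \<in> univ B0" "c \<in> univ B0" using xs xy by auto
        show "rel B0 R xs = rel (reduct {E} T) R (map (v i) xs)"
          using R xy kEenc[OF i i bc] kencU[OF i bc(1)] kencU[OF i bc(2)] blk_const[OF i bc] by (auto simp: I_E)
      qed
    qed
    define Good where "Good p i \<psi> \<longleftrightarrow> inj_on \<psi> S \<and> \<psi> ` S \<subseteq> univ B0 \<and> (\<forall>R\<in>LT. \<forall>ys. length ys = ar R \<and> set ys \<subseteq> S \<longrightarrow> (rel T R (map (u p) ys) = rel T R (map (v i \<circ> \<psi>) ys)))" for p i \<psi>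
    define \<Psi> where "\<Psi> p i = (SOME \<psi>. Good p i \<psi>)" for p i
    have \<Psi>: "\<And>p i. i < n \<Longrightarrow> inj_on (\<Psi> p i) S \<and> \<Psi> p i ` S \<subseteq> univ B0 \<and> (\<forall>R\<in>LT. \<forall>ys. length ys = ar R \<and> set ys \<subseteq> S \<longrightarrow> (rel T R (map (u p) ys) = rel T R (map (v i \<circ> \<Psi> p i) ys)))"
    proof -
      fix p i assume i: "i < n"
      have "\<exists>\<psi>. Good p i \<psi>" unfolding Good_def by (rule HB[OF uemb vemb[OF i]])
      then have "Good p i (\<Psi> p i)" unfolding \<Psi>_def by (rule someI_ex)
      then show "inj_on (\<Psi> p i) S \<and> \<Psi> p i ` S \<subseteq> univ B0 \<and> (\<forall>R\<in>LT. \<forall>ys. length ys = ar R \<and> set ys \<subseteq> S \<longrightarrow> (rel T R (map (u p) ys) = rel T R (map (v i \<circ> \<Psi> p i) ys)))"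
        unfolding Good_def .
    qed

    have \<phi>n: "\<And>a. a \<in> univ A \<Longrightarrow> \<phi> a < n" using fU fa by (metis SigmaD1 lessThan_iff)
    have \<beta>n: "\<And>a. a \<in> univ A \<Longrightarrow> \<beta> a < n" using hU ha by (metis SigmaD1 lessThan_iff)
    have f2S: "\<And>a. a \<in> univ A \<Longrightarrow> f2 a \<in> S" by (simp add: S_def f2_def)
    define b0 where "b0 = (SOME b. b \<in> univ B0)"
    have b0: "\<And>a. a \<in> univ A \<Longrightarrow> b0 \<in> univ B0"
    proof -
      fix a assume a: "a \<in> univ A"
      have "\<Psi> (\<phi> a) (\<phi> a) (f2 a) \<in> univ B0" using \<Psi>[OF \<phi>n[OF a]] f2S[OF a] by blast
      then show "b0 \<in> univ B0" unfolding b0_def by (rule someI)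
    qed
    define Ix where "Ix q = (SOME i. i < n \<and> blk i b0 = q)" for q
    have Ix: "\<And>a. a \<in> univ A \<Longrightarrow> Ix (\<beta> a) < n \<and> blk (Ix (\<beta> a)) b0 = \<beta> a"
    proof -
      fix a assume a: "a \<in> univ A"
      have b: "b0 \<in> univ B0" using b0[OF a] .
      have "(\<lambda>i. blk i b0) ` {..<n} \<subseteq> {..<n}" using kencU b by auto
      moreover have "inj_on (\<lambda>i. blk i b0) {..<n}" using blk_inj b by (auto simp: inj_on_def)
      ultimately have "(\<lambda>i. blk i b0) ` {..<n} = {..<n}" by (intro endo_inj_surj) auto
      then have "\<exists>i. i < n \<and> blk i b0 = \<beta> a" using \<beta>n[OF a] by (metis imageE lessThan_iff)
      then show "Ix (\<beta> a) < n \<and> blk (Ix (\<beta> a)) b0 = \<beta> a" unfolding Ix_def by (rule someI_ex)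
    qed
    define \<Phi> where "\<Phi> a = prod_encode (Ix (\<beta> a), \<Psi> (\<phi> a) (Ix (\<beta> a)) (f2 a))" for a
    define V where "V a = v (Ix (\<beta> a)) (\<Psi> (\<phi> a) (Ix (\<beta> a)) (f2 a))" for a
    have \<Psi>B: "\<And>a. a \<in> univ A \<Longrightarrow> \<Psi> (\<phi> a) (Ix (\<beta> a)) (f2 a) \<in> univ B0"
      using \<Psi> Ix f2S by blast
    have \<Phi>B: "\<And>a. a \<in> univ A \<Longrightarrow> \<Phi> a \<in> Bu" unfolding \<Phi>_def using encB Ix \<Psi>B by blast
    have k\<Phi>: "\<And>a. a \<in> univ A \<Longrightarrow> k (\<Phi> a) = (\<beta> a, V a)"
      unfolding \<Phi>_def V_def using kenc blk_const Ix \<Psi>B b0 by metis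
    have VU: "\<And>a. a \<in> univ A \<Longrightarrow> V a \<in> univ T" unfolding V_def using kencU Ix \<Psi>B by blast
    have \<Phi>inj: "inj_on \<Phi> (univ A)"
    proof (rule inj_onI)
      fix a b assume ab: "a \<in> univ A" "b \<in> univ A" "\<Phi> a = \<Phi> b"
      then have "\<beta> a = \<beta> b" using k\<Phi> by (metis prod.inject)
      then have p: "\<phi> a = \<phi> b" using same ab by blast
      have "\<Psi> (\<phi> a) (Ix (\<beta> a)) (f2 a) = \<Psi> (\<phi> b) (Ix (\<beta> b)) (f2 b)"
        using ab(3) inj_prod_encode unfolding \<Phi>_def by (auto simp: inj_eq)
      then have "f2 a = f2 b" using \<Psi>[OF Ix[OF ab(1), THEN conjunct1]] f2S ab p \<open>\<beta> a = \<beta> b\<close> by (metis inj_onD)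
      then show "a = b" using f2inj ab p by blast
    qed
    have key: "\<And>R xs. R\<in>LT \<Longrightarrow> length xs = ar R \<Longrightarrow> set xs \<subseteq> univ A \<Longrightarrow> (\<forall>x\<in>set xs. \<forall>y\<in>set xs. \<beta> x = \<beta> y) \<Longrightarrow> rel T R (map h2 xs) \<longleftrightarrow> rel T R (map V xs)"
    proof -
      fix R xs assume R: "R\<in>LT" and L: "length xs = ar R" and xs: "set xs \<subseteq> univ A" and eq: "\<forall>x\<in>set xs. \<forall>y\<in>set xs. \<beta> x = \<beta> y"
      show "rel T R (map h2 xs) \<longleftrightarrow> rel T R (map V xs)"
      proof (cases xs)
        case (Cons a0 rest)
        then have a0: "a0 \<in> set xs" "a0 \<in> univ A" using xs by auto
        define p where "p = \<phi> a0"
        define i where "i = Ix (\<beta> a0)"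
        have i: "i < n" using Ix a0 by (simp add: i_def)
        have bx: "\<And>x. x \<in> set xs \<Longrightarrow> \<beta> x = \<beta> a0" using eq a0 by blast
        have px: "\<And>x. x \<in> set xs \<Longrightarrow> \<phi> x = p" using same bx xs a0 unfolding p_def by blast
        have m1: "map h2 xs = map (u p) (map f2 xs)" using uh px xs by (force intro!: map_cong)
        have m2: "map V xs = map (v i \<circ> \<Psi> p i) (map f2 xs)" using px bx xs unfolding V_def i_def by (auto intro!: map_cong)
        have "set (map f2 xs) \<subseteq> S" using f2S xs by auto
        moreover have "length (map f2 xs) = ar R" using L by simp
        ultimately have "rel T R (map (u p) (map f2 xs)) = rel T R (map (v i \<circ> \<Psi> p i) (map f2 xs))"
          using \<Psi>[OF i, of p] R by blast
        then show ?thesis unfolding m1 m2 .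
      qed simp
    qed
    show "embeds (In_lang LT n) (In_arity ar) As Bs"
      unfolding embeds_def embedding_def
    proof (rule exI[of _ \<Phi>], intro conjI ballI allI impI)
      show "inj_on \<Phi> (univ As)" using \<Phi>inj uA by simp
      show "\<Phi> ` univ As \<subseteq> univ Bs" using \<Phi>B uA uB by auto
      fix \<Sigma> xs assume \<Sigma>: "\<Sigma> \<in> In_lang LT n" and xs: "length xs = In_arity ar \<Sigma> \<and> set xs \<subseteq> univ As"
      have r1: "rel As \<Sigma> xs = rel I \<Sigma> (map h xs)" using hrel \<Sigma> xs uA by auto
      have "set (map \<Phi> xs) \<subseteq> Bu" using \<Phi>B xs uA by auto
      then have r2: "rel Bs \<Sigma> (map \<Phi> xs) = rel I \<Sigma> (map (k \<circ> \<Phi>) xs)" using krel[OF \<Sigma>] xs by auto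
      have "rel I \<Sigma> (map h xs) = rel I \<Sigma> (map (k \<circ> \<Phi>) xs)"
      proof (rule transfer[where \<beta>=\<beta> and X=h2 and Y=V])
        show "\<forall>x\<in>set xs. h x = (\<beta> x, h2 x) \<and> (k \<circ> \<Phi>) x = (\<beta> x, V x) \<and> \<beta> x < n \<and> h2 x \<in> univ T \<and> V x \<in> univ T"
          using xs uA ha k\<Phi> \<beta>n h2U VU by auto
        show "\<forall>R. \<Sigma> = Inl R \<longrightarrow> R \<in> LT \<longrightarrow> length xs = ar R \<longrightarrow> (\<forall>x\<in>set xs. \<forall>y\<in>set xs. \<beta> x = \<beta> y) \<longrightarrow> (rel T R (map h2 xs) \<longleftrightarrow> rel T R (map V xs))"
        proof (intro allI impI)
          fix R assume "R \<in> LT" "length xs = ar R" "\<forall>x\<in>set xs. \<forall>y\<in>set xs. \<beta> x = \<beta> y"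
          moreover have "set xs \<subseteq> univ A" using xs uA by simp
          ultimately show "rel T R (map h2 xs) \<longleftrightarrow> rel T R (map V xs)" using key by blast
        qed
        show "length xs = In_arity ar \<Sigma>" using xs by simp
      qed
      then show "rel As \<Sigma> xs = rel Bs \<Sigma> (map \<Phi> xs)" using r1 r2 by simp
    qed
  qed
qed

end
theorem mainTheorem8:
  fixes LT :: "'r set" and ar :: "'r \<Rightarrow> nat" and E Lt :: 'r
    and Tstar :: "('a, 'r) struct"
  assumes "countable LT"
    and "E \<in> LT" and "Lt \<in> LT" and "E \<noteq> Lt"
    and "ar E = 2" and "ar Lt = 2"
    and "wf_struct LT ar Tstar"
    and "countable (univ Tstar)"
    and "tournament E (reduct {E} Tstar)"
    and "homogeneous {E} ar (reduct {E} Tstar)"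
    and "strict_linear_order_on (univ Tstar) (\<lambda>x y. rel Tstar Lt [x, y])"
    and "expansion_property {E} LT ar (Age {E} ar (reduct {E} Tstar)) (Age LT ar Tstar)"
    and "n > 0"
  shows "expansion_property {Inl E} (In_lang LT n) (In_arity ar)
           (Age {Inl E} (In_arity ar) (reduct {Inl E} (In_star LT ar Lt n Tstar)))
           (Age (In_lang LT n) (In_arity ar) (In_star LT ar Lt n Tstar))"
proof -
  interpret c: ctx LT ar E Lt Tstar n using assms by (simp add: ctx_def)
  show ?thesis unfolding expansion_property_def using c.main by blast
qed

end
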